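(* Let $n\ge3$, $\emptyset\ne S\subseteq\{1,\dots,n-1\}$, $\mathfrak p\mathfrak p_n:=\sum_{i\in S}\mathfrak p_i\mathfrak p_n$. Then $$(1+\mathfrak p\mathfrak p_n)^*\cap(1+\mathfrak a_{n,s})^*=\begin{cases}\big(1+\sum_{|I|=s,\ I\in\mathcal J(\mathfrak p)}\mathfrak p_I\big)^*,& s=2,\dots,n-1,\\ (1+F_n)^*,& s=n.\end{cases}$$ In particular $(1+\mathfrak p\mathfrak p_n)^*\cap(1+\mathfrak a_{n,1})^*=(1+\mathfrak p\mathfrak p_n)^*\cap(1+\mathfrak a_{n,2})^*=(1+\mathfrak p\mathfrak p_n)^*$.
   Context: $K$ is a field. $\mathbb S_n$: $K$-algebra generated by $x_1,\dots,x_n,y_1,\dots,y_n$ with relations $y_ix_i=1$, $[x_i,y_j]=[x_i,x_j]=[y_i,y_j]=0$ ($i\ne j$). $e_i:=1-x_iy_i$; $\mathfrak p_i$ = ideal of $\mathbb S_n$ generated by $e_i$; $\mathfrak p_I:=\prod_{i\in I}\mathfrak p_i$; $\mathfrak a_{n,s}:=\sum_{|I|=s}\mathfrak p_I$; $F_n:=\mathfrak p_{\{1,\dots,n\}}$. $(1+\mathfrak b)^*$ = group of units of $\mathbb S_n$ lying in $1+\mathfrak b$. $\mathcal J(\mathfrak p):=\{J\subseteq\{1,\dots,n\}: n\in J,\ J\cap S\ne\emptyset\}$. *)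

theory Defs
  imports "HOL-Algebra.Ideal"
begin

text \<open>The Jacobson algebra S_n is realised as the monoid algebra over K of the
direct product of n copies of the bicyclic monoid: the monomial x^a y^b
(a, b multi-indices, variables indexed by 1..n) is the pair (a, b).
In one variable  x^a y^b * x^c y^d = x^(a + c - min b c) y^(b + d - min b c),
which encodes y x = 1; distinct variables commute.\<close>

type_synonym bmon = "(nat \<Rightarrow> nat) \<times> (nat \<Rightarrow> nat)"

definition bmul :: "bmon \<Rightarrow> bmon \<Rightarrow> bmon" where
  "bmul p q = ((\<lambda>i. fst p i + fst q i - min (snd p i) (fst q i)),
               (\<lambda>i. snd p i + snd q i - min (snd p i) (fst q i)))"

definition bmons :: "nat \<Rightarrow> bmon set" where
  "bmons n = {m. \<forall>i. (i < 1 \<or> n < i) \<longrightarrow> fst m i = 0 \<and> snd m i = 0}"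

definition Sn_carrier :: "nat \<Rightarrow> (bmon \<Rightarrow> 'k::field) set" where
  "Sn_carrier n = {f. finite {m. f m \<noteq> 0} \<and> (\<forall>m. f m \<noteq> 0 \<longrightarrow> m \<in> bmons n)}"

definition Sn_mult :: "(bmon \<Rightarrow> 'k::field) \<Rightarrow> (bmon \<Rightarrow> 'k) \<Rightarrow> bmon \<Rightarrow> 'k" where
  "Sn_mult f g = (\<lambda>m. \<Sum>pq \<in> {pq. f (fst pq) \<noteq> 0 \<and> g (snd pq) \<noteq> 0 \<and> bmul (fst pq) (snd pq) = m}.
                        f (fst pq) * g (snd pq))"

definition Sn_one :: "bmon \<Rightarrow> 'k::field" where
  "Sn_one = (\<lambda>m. if m = ((\<lambda>_. 0), (\<lambda>_. 0)) then 1 else 0)"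

definition Sn :: "nat \<Rightarrow> (bmon \<Rightarrow> 'k::field) ring" where
  "Sn n = \<lparr>carrier = Sn_carrier n, mult = Sn_mult, one = Sn_one,
           zero = (\<lambda>_. 0), add = (\<lambda>f g m. f m + g m)\<rparr>"

definition Sx :: "nat \<Rightarrow> bmon \<Rightarrow> 'k::field" where
  "Sx i = (\<lambda>m. if m = ((\<lambda>j. if j = i then 1 else 0), (\<lambda>_. 0)) then 1 else 0)"

definition Sy :: "nat \<Rightarrow> bmon \<Rightarrow> 'k::field" where
  "Sy i = (\<lambda>m. if m = ((\<lambda>_. 0), (\<lambda>j. if j = i then 1 else 0)) then 1 else 0)"

definition Se :: "nat \<Rightarrow> bmon \<Rightarrow> 'k::field" where
  "Se i = (\<lambda>m. Sn_one m - Sn_mult (Sx i) (Sy i) m)"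

definition pid :: "nat \<Rightarrow> nat \<Rightarrow> (bmon \<Rightarrow> 'k::field) set" where
  "pid n i = genideal (Sn n) {Se i}"

definition ideal_prod :: "('a, 'b) ring_scheme \<Rightarrow> 'a set \<Rightarrow> 'a set \<Rightarrow> 'a set" where
  "ideal_prod R I J = genideal R {a \<otimes>\<^bsub>R\<^esub> b | a b. a \<in> I \<and> b \<in> J}"

definition ideal_sum :: "('a, 'b) ring_scheme \<Rightarrow> 'a set set \<Rightarrow> 'a set" where
  "ideal_sum R \<I> = genideal R (\<Union>\<I>)"

definition pI :: "nat \<Rightarrow> nat set \<Rightarrow> (bmon \<Rightarrow> 'k::field) set" where
  "pI n I = foldr (\<lambda>i J. ideal_prod (Sn n) (pid n i) J) (sorted_list_of_set I) (carrier (Sn n))"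

definition a_ns :: "nat \<Rightarrow> nat \<Rightarrow> (bmon \<Rightarrow> 'k::field) set" where
  "a_ns n s = ideal_sum (Sn n) {pI n I | I. I \<subseteq> {1..n} \<and> card I = s}"

definition Fn :: "nat \<Rightarrow> (bmon \<Rightarrow> 'k::field) set" where
  "Fn n = pI n {1..n}"

definition one_plus_units :: "('a, 'b) ring_scheme \<Rightarrow> 'a set \<Rightarrow> 'a set" where
  "one_plus_units R b = {u \<in> Units R. \<exists>c \<in> b. u = \<one>\<^bsub>R\<^esub> \<oplus>\<^bsub>R\<^esub> c}"

definition ppn :: "nat \<Rightarrow> nat set \<Rightarrow> (bmon \<Rightarrow> 'k::field) set" where
  "ppn n S = ideal_sum (Sn n) {ideal_prod (Sn n) (pid n i) (pid n n) | i. i \<in> S}"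

definition Jp :: "nat \<Rightarrow> nat set \<Rightarrow> nat set set" where
  "Jp n S = {J. J \<subseteq> {1..n} \<and> n \<in> J \<and> J \<inter> S \<noteq> {}}"

end

theory Submission
  imports Defs
begin


lemma bmul_assoc: "bmul (bmul p q) r = bmul p (bmul q r)"
  unfolding bmul_def by (auto simp: fun_eq_iff min_def)

lemma bmul_unit_l: "bmul ((\<lambda>_. 0), (\<lambda>_. 0)) p = p"
  unfolding bmul_def by (auto simp: fun_eq_iff)
lemma bmul_unit_r: "bmul p ((\<lambda>_. 0), (\<lambda>_. 0)) = p"
  unfolding bmul_def by (auto simp: fun_eq_iff)

lemma bmul_bmons: "p \<in> bmons n \<Longrightarrow> q \<in> bmons n \<Longrightarrow> bmul p q \<in> bmons n"
  unfolding bmul_def bmons_def by auto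

lemma push_pair:
  fixes \<Phi> w :: "_ \<Rightarrow> 'a::comm_semiring_1"
  assumes "finite A" "finite X" "g ` A \<subseteq> X"
  shows "(\<Sum>s\<in>X. \<Phi> s * (\<Sum>a\<in>A. if g a = s then w a else 0)) = (\<Sum>a\<in>A. \<Phi> (g a) * w a)"
proof -
  have "(\<Sum>s\<in>X. \<Phi> s * (\<Sum>a\<in>A. if g a = s then w a else 0))
     = (\<Sum>s\<in>X. \<Sum>a\<in>A. (if g a = s then \<Phi> s * w a else 0))"
    by (simp add: sum_distrib_left if_distrib cong: if_cong)
  also have "\<dots> = (\<Sum>a\<in>A. \<Sum>s\<in>X. (if g a = s then \<Phi> s * w a else 0))"
    by (rule sum.swap)
  also have "\<dots> = (\<Sum>a\<in>A. \<Phi> (g a) * w a)"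
    apply (rule sum.cong, simp)
    using assms by (subst sum.delta') auto
  finally show ?thesis .
qed

lemma mult_superset:
  assumes "finite A" "finite B" "{m. f m \<noteq> 0} \<subseteq> A" "{m. g m \<noteq> 0} \<subseteq> B"
  shows "Sn_mult f g m = (\<Sum>pq\<in>A \<times> B. if bmul (fst pq) (snd pq) = m then f (fst pq) * g (snd pq) else 0)"
  unfolding Sn_mult_def
  apply (rule sum.mono_neutral_cong_left)
  using assms by (auto intro: finite_subset)

lemma supp_mult:
  assumes "finite A" "finite B" "{m. f m \<noteq> 0} \<subseteq> A" "{m. g m \<noteq> 0} \<subseteq> B"
  shows "{m. Sn_mult f g m \<noteq> 0} \<subseteq> (\<lambda>pq. bmul (fst pq) (snd pq)) ` (A \<times> B)"
proof
  fix m assume "m \<in> {m. Sn_mult f g m \<noteq> 0}"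
  hence "(\<Sum>pq\<in>A \<times> B. if bmul (fst pq) (snd pq) = m then f (fst pq) * g (snd pq) else 0) \<noteq> 0"
    using mult_superset[OF assms] by simp
  hence "\<exists>pq\<in>A \<times> B. bmul (fst pq) (snd pq) = m"
  proof (rule contrapos_np)
    assume "\<not> (\<exists>pq\<in>A \<times> B. bmul (fst pq) (snd pq) = m)"
    thus "(\<Sum>pq\<in>A \<times> B. if bmul (fst pq) (snd pq) = m then f (fst pq) * g (snd pq) else 0) = 0"
      by (intro sum.neutral) auto
  qed
  then obtain pq where "pq \<in> A \<times> B" "bmul (fst pq) (snd pq) = m" by blast
  thus "m \<in> (\<lambda>pq. bmul (fst pq) (snd pq)) ` (A \<times> B)" by force
qed

lemma mult_pair:
  assumes "finite A" "finite B" "{m. f m \<noteq> 0} \<subseteq> A" "{m. g m \<noteq> 0} \<subseteq> B"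
    and "finite X" "(\<lambda>pq. bmul (fst pq) (snd pq)) ` (A \<times> B) \<subseteq> X"
  shows "(\<Sum>s\<in>X. \<Phi> s * Sn_mult f g s) = (\<Sum>p\<in>A. \<Sum>q\<in>B. \<Phi> (bmul p q) * (f p * g q))"
proof -
  have "(\<Sum>s\<in>X. \<Phi> s * Sn_mult f g s) = (\<Sum>pq\<in>A\<times>B. \<Phi> (bmul (fst pq) (snd pq)) * (f (fst pq) * g (snd pq)))"
    unfolding mult_superset[OF assms(1-4)]
    by (rule push_pair[where g="\<lambda>pq. bmul (fst pq) (snd pq)" and w="\<lambda>pq. f (fst pq) * g (snd pq)"])
       (use assms in auto)
  also have "\<dots> = (\<Sum>p\<in>A. \<Sum>q\<in>B. \<Phi> (bmul p q) * (f p * g q))"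
    by (simp add: sum.cartesian_product')
  finally show ?thesis .
qed

lemma mult_assoc_fun:
  fixes f g h :: "bmon \<Rightarrow> 'k::field"
  assumes "finite {m. f m \<noteq> 0}" "finite {m. g m \<noteq> 0}" "finite {m. h m \<noteq> 0}"
  shows "Sn_mult (Sn_mult f g) h = Sn_mult f (Sn_mult g h)"
proof
  fix m
  define A where "A = {m. f m \<noteq> 0}"
  define B where "B = {m. g m \<noteq> 0}"
  define C where "C = {m. h m \<noteq> 0}"
  define AB where "AB = (\<lambda>pq. bmul (fst pq) (snd pq)) ` (A \<times> B)"
  define BC where "BC = (\<lambda>pq. bmul (fst pq) (snd pq)) ` (B \<times> C)"
  have fin: "finite A" "finite B" "finite C" "finite AB" "finite BC"
    using assms by (auto simp: A_def B_def C_def AB_def BC_def)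
  have sAB: "{m. Sn_mult f g m \<noteq> 0} \<subseteq> AB" unfolding AB_def
    by (rule supp_mult) (use fin in \<open>auto simp: A_def B_def\<close>)
  have sBC: "{m. Sn_mult g h m \<noteq> 0} \<subseteq> BC" unfolding BC_def
    by (rule supp_mult) (use fin in \<open>auto simp: C_def B_def\<close>)
  have "Sn_mult (Sn_mult f g) h m = (\<Sum>pq\<in>AB \<times> C. if bmul (fst pq) (snd pq) = m then Sn_mult f g (fst pq) * h (snd pq) else 0)"
    by (rule mult_superset) (use fin sAB in \<open>auto simp: C_def\<close>)
  also have "\<dots> = (\<Sum>s\<in>AB. \<Sum>r\<in>C. (if bmul s r = m then h r else 0) * Sn_mult f g s)"
    by (subst sum.cartesian_product') (auto intro!: sum.cong)
  also have "\<dots> = (\<Sum>r\<in>C. \<Sum>s\<in>AB. (if bmul s r = m then h r else 0) * Sn_mult f g s)"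
    by (rule sum.swap)
  also have "\<dots> = (\<Sum>r\<in>C. \<Sum>p\<in>A. \<Sum>q\<in>B. (if bmul (bmul p q) r = m then h r else 0) * (f p * g q))"
    apply (rule sum.cong, simp)
    apply (rule mult_pair) using fin by (auto simp: A_def B_def AB_def)
  also have "\<dots> = (\<Sum>p\<in>A. \<Sum>r\<in>C. \<Sum>q\<in>B. (if bmul (bmul p q) r = m then h r else 0) * (f p * g q))"
    by (rule sum.swap)
  also have "\<dots> = (\<Sum>p\<in>A. \<Sum>q\<in>B. \<Sum>r\<in>C. (if bmul (bmul p q) r = m then h r else 0) * (f p * g q))"
    by (rule sum.cong, simp, rule sum.swap)
  also have "\<dots> = (\<Sum>p\<in>A. \<Sum>q\<in>B. \<Sum>r\<in>C. (if bmul p (bmul q r) = m then f p else 0) * (g q * h r))"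
    by (auto simp: bmul_assoc mult_ac intro!: sum.cong)
  also have "\<dots> = (\<Sum>p\<in>A. \<Sum>t\<in>BC. (if bmul p t = m then f p else 0) * Sn_mult g h t)"
    apply (rule sum.cong, simp)
    apply (subst mult_pair[where A=B and B=C])
    using fin by (auto simp: B_def C_def BC_def sum.cartesian_product')
  also have "\<dots> = (\<Sum>pq\<in>A \<times> BC. if bmul (fst pq) (snd pq) = m then f (fst pq) * Sn_mult g h (snd pq) else 0)"
    by (subst sum.cartesian_product') (auto intro!: sum.cong)
  also have "\<dots> = Sn_mult f (Sn_mult g h) m"
    by (rule mult_superset[symmetric]) (use fin sBC in \<open>auto simp: A_def\<close>)
  finally show "Sn_mult (Sn_mult f g) h m = Sn_mult f (Sn_mult g h) m" .
qed

lemma Sn_simps[simp]: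
  "carrier (Sn n) = Sn_carrier n" "mult (Sn n) = Sn_mult" "one (Sn n) = Sn_one"
  "zero (Sn n) = (\<lambda>_. 0)" "add (Sn n) = (\<lambda>f g m. f m + g m)"
  by (simp_all add: Sn_def)

lemma Sn_carrier_iff:
  "f \<in> Sn_carrier n \<longleftrightarrow> finite {m. f m \<noteq> 0} \<and> (\<forall>m. f m \<noteq> 0 \<longrightarrow> m \<in> bmons n)"
  by (simp add: Sn_carrier_def)

lemma Sn_mult_closed:
  assumes "f \<in> Sn_carrier n" "g \<in> Sn_carrier n"
  shows "Sn_mult f g \<in> Sn_carrier n"
proof -
  have fin: "finite {m. f m \<noteq> 0}" "finite {m. g m \<noteq> 0}" using assms by (auto simp: Sn_carrier_iff)
  have s: "{m. Sn_mult f g m \<noteq> 0} \<subseteq> (\<lambda>pq. bmul (fst pq) (snd pq)) ` ({m. f m \<noteq> 0} \<times> {m. g m \<noteq> 0})"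
    by (rule supp_mult) (use fin in auto)
  have "finite {m. Sn_mult f g m \<noteq> 0}" by (rule finite_subset[OF s]) (use fin in auto)
  moreover have "m \<in> bmons n" if "Sn_mult f g m \<noteq> 0" for m
  proof -
    from s that obtain p q where pq: "f p \<noteq> 0" "g q \<noteq> 0" "m = bmul p q" by auto
    have "p \<in> bmons n" "q \<in> bmons n" using assms pq unfolding Sn_carrier_def by blast+
    thus ?thesis using pq bmul_bmons by blast
  qed
  ultimately show ?thesis by (auto simp: Sn_carrier_iff)
qed

lemma Sn_one_carrier: "Sn_one \<in> Sn_carrier n"
proof -
  have "{m. Sn_one m \<noteq> (0::'a::field)} = {((\<lambda>_. 0), (\<lambda>_. 0))}" by (auto simp: Sn_one_def)
  thus ?thesis by (auto simp: Sn_carrier_iff bmons_def Sn_one_def split: if_splits)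
qed

lemma Sn_mult_one_l:
  assumes "finite {m. f m \<noteq> 0}"
  shows "Sn_mult Sn_one f = (f :: bmon \<Rightarrow> 'k::field)"
proof
  fix m
  have "Sn_mult Sn_one f m = (\<Sum>pq\<in>{((\<lambda>_. 0), (\<lambda>_. 0))} \<times> {m. f m \<noteq> 0}.
      if bmul (fst pq) (snd pq) = m then Sn_one (fst pq) * f (snd pq) else 0)"
    by (rule mult_superset) (use assms in \<open>auto simp: Sn_one_def split: if_splits\<close>)
  also have "\<dots> = (\<Sum>q\<in>{m. f m \<noteq> 0}. if q = m then f q else 0)"
    by (subst sum.cartesian_product') (auto intro!: sum.cong simp: bmul_unit_l Sn_one_def)
  also have "\<dots> = f m" using assms by (subst sum.delta) auto
  finally show "Sn_mult Sn_one f m = f m" .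
qed

lemma Sn_mult_one_r:
  assumes "finite {m. f m \<noteq> 0}"
  shows "Sn_mult f Sn_one = (f :: bmon \<Rightarrow> 'k::field)"
proof
  fix m
  have "Sn_mult f Sn_one m = (\<Sum>pq\<in>{m. f m \<noteq> 0} \<times> {((\<lambda>_. 0), (\<lambda>_. 0))}.
      if bmul (fst pq) (snd pq) = m then f (fst pq) * Sn_one (snd pq) else 0)"
    by (rule mult_superset) (use assms in \<open>auto simp: Sn_one_def split: if_splits\<close>)
  also have "\<dots> = (\<Sum>q\<in>{m. f m \<noteq> 0}. if q = m then f q else 0)"
    by (subst sum.cartesian_product') (auto intro!: sum.cong simp: bmul_unit_r Sn_one_def)
  also have "\<dots> = f m" using assms by (subst sum.delta) auto
  finally show "Sn_mult f Sn_one m = f m" .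
qed

lemma Sn_distr_l:
  fixes f g h :: "bmon \<Rightarrow> 'k::field"
  assumes "finite {m. f m \<noteq> 0}" "finite {m. g m \<noteq> 0}" "finite {m. h m \<noteq> 0}"
  shows "Sn_mult (\<lambda>m. f m + g m) h = (\<lambda>m. Sn_mult f h m + Sn_mult g h m)"
proof
  fix m
  let ?A = "{m. f m \<noteq> 0} \<union> {m. g m \<noteq> 0}" and ?C = "{m. h m \<noteq> 0}"
  have "Sn_mult (\<lambda>m. f m + g m) h m = (\<Sum>pq\<in>?A \<times> ?C. if bmul (fst pq) (snd pq) = m then (f (fst pq) + g (fst pq)) * h (snd pq) else 0)"
    by (rule mult_superset) (use assms in auto)
  also have "\<dots> = (\<Sum>pq\<in>?A \<times> ?C. if bmul (fst pq) (snd pq) = m then f (fst pq) * h (snd pq) else 0)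
      + (\<Sum>pq\<in>?A \<times> ?C. if bmul (fst pq) (snd pq) = m then g (fst pq) * h (snd pq) else 0)"
    by (subst sum.distrib[symmetric]) (auto intro!: sum.cong simp: distrib_right)
  also have "\<dots> = Sn_mult f h m + Sn_mult g h m"
    by (subst (1 2) mult_superset[where A="?A" and B="?C"]) (use assms in auto)
  finally show "Sn_mult (\<lambda>m. f m + g m) h m = Sn_mult f h m + Sn_mult g h m" .
qed

lemma Sn_distr_r:
  fixes f g h :: "bmon \<Rightarrow> 'k::field"
  assumes "finite {m. f m \<noteq> 0}" "finite {m. g m \<noteq> 0}" "finite {m. h m \<noteq> 0}"
  shows "Sn_mult h (\<lambda>m. f m + g m) = (\<lambda>m. Sn_mult h f m + Sn_mult h g m)"
proof
  fix m
  let ?A = "{m. f m \<noteq> 0} \<union> {m. g m \<noteq> 0}" and ?C = "{m. h m \<noteq> 0}"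
  have "Sn_mult h (\<lambda>m. f m + g m) m = (\<Sum>pq\<in>?C \<times> ?A. if bmul (fst pq) (snd pq) = m then h (fst pq) * (f (snd pq) + g (snd pq)) else 0)"
    by (rule mult_superset) (use assms in auto)
  also have "\<dots> = (\<Sum>pq\<in>?C \<times> ?A. if bmul (fst pq) (snd pq) = m then h (fst pq) * f (snd pq) else 0)
      + (\<Sum>pq\<in>?C \<times> ?A. if bmul (fst pq) (snd pq) = m then h (fst pq) * g (snd pq) else 0)"
    by (subst sum.distrib[symmetric]) (auto intro!: sum.cong simp: distrib_left)
  also have "\<dots> = Sn_mult h f m + Sn_mult h g m"
    by (subst (1 2) mult_superset[where A="?C" and B="?A"]) (use assms in auto)
  finally show "Sn_mult h (\<lambda>m. f m + g m) m = Sn_mult h f m + Sn_mult h g m" .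
qed

lemma Sn_add_closed: "f \<in> Sn_carrier n \<Longrightarrow> g \<in> Sn_carrier n \<Longrightarrow> (\<lambda>m. f m + g m) \<in> Sn_carrier n"
proof -
  assume a: "f \<in> Sn_carrier n" "g \<in> Sn_carrier n"
  have "{m. f m + g m \<noteq> 0} \<subseteq> {m. f m \<noteq> 0} \<union> {m. g m \<noteq> 0}" by auto
  with a show ?thesis unfolding Sn_carrier_iff by (auto intro: finite_subset)
qed

lemma Sn_neg_closed: "f \<in> Sn_carrier n \<Longrightarrow> (\<lambda>m. - f m) \<in> Sn_carrier n"
  unfolding Sn_carrier_iff by auto

lemma Sn_ring: "ring (Sn n :: (bmon \<Rightarrow> 'k::field) ring)"
proof (rule ringI)
  show "abelian_group (Sn n :: (bmon \<Rightarrow> 'k::field) ring)"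
  proof (rule abelian_groupI, goal_cases)
    case 1 thus ?case by (simp add: Sn_add_closed)
  next
    case 2 thus ?case by (simp add: Sn_carrier_iff)
  next
    case 3 thus ?case by (simp add: add.assoc)
  next
    case 4 thus ?case by (simp add: add.commute)
  next
    case 5 thus ?case by simp
  next
    case (6 x) thus ?case
      by (intro bexI[where x="\<lambda>m. - x m"]) (auto simp: Sn_neg_closed)
  qed
  show "monoid (Sn n :: (bmon \<Rightarrow> 'k::field) ring)"
  proof (rule monoidI, goal_cases)
    case 1 thus ?case by (simp add: Sn_mult_closed)
  next
    case 2 thus ?case by (simp add: Sn_one_carrier)
  next
    case 3 thus ?case by (simp add: mult_assoc_fun Sn_carrier_def)
  next
    case 4 thus ?case by (simp add: Sn_mult_one_l Sn_carrier_def)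
  next
    case 5 thus ?case by (simp add: Sn_mult_one_r Sn_carrier_def)
  qed
qed (auto simp: Sn_carrier_def Sn_distr_l Sn_distr_r)

lemma Sn_a_inv:
  assumes "f \<in> Sn_carrier n"
  shows "a_inv (Sn n) f = (\<lambda>m. - (f m :: 'k::field))"
proof -
  interpret ring "Sn n :: (bmon \<Rightarrow> 'k) ring" by (rule Sn_ring)
  show ?thesis
    by (rule minus_equality) (use assms in \<open>auto simp: Sn_neg_closed\<close>)
qed

lemma Sn_minus:
  assumes "f \<in> Sn_carrier n" "g \<in> Sn_carrier n"
  shows "a_minus (Sn n) f g = (\<lambda>m. f m - (g m :: 'k::field))"
  using assms by (simp add: a_minus_def Sn_a_inv)



definition Push :: "(bmon \<Rightarrow> bmon) \<Rightarrow> (bmon \<Rightarrow> 'k::field) \<Rightarrow> bmon \<Rightarrow> 'k" where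
  "Push h f r = (\<Sum>p\<in>{p. f p \<noteq> 0 \<and> h p = r}. f p)"

lemma push_superset:
  assumes "finite A" "{m. f m \<noteq> 0} \<subseteq> A"
  shows "Push h f r = (\<Sum>p\<in>A. if h p = r then f p else 0)"
proof -
  have "Push h f r = (\<Sum>p\<in>{p\<in>A. h p = r}. f p)"
    unfolding Push_def
    by (rule sum.mono_neutral_left) (use assms in auto)
  also have "\<dots> = (\<Sum>p\<in>A. if h p = r then f p else 0)"
    using assms(1) by (rule sum.inter_filter)
  finally show ?thesis .
qed

lemma push_pair_gen:
  assumes "finite A" "{m. f m \<noteq> 0} \<subseteq> A" "finite X" "h ` A \<subseteq> X"
  shows "(\<Sum>s\<in>X. \<Phi> s * Push h f s) = (\<Sum>p\<in>A. \<Phi> (h p) * (f p :: 'k::field))"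
  unfolding push_superset[OF assms(1,2)]
  by (rule push_pair) (use assms in auto)

lemma push_zero_sum:
  assumes "Push h f = (\<lambda>_. 0)" "finite A" "{m. f m \<noteq> 0} \<subseteq> A"
  shows "(\<Sum>p\<in>A. \<Phi> (h p) * (f p :: 'k::field)) = 0"
proof -
  have "(\<Sum>p\<in>A. \<Phi> (h p) * f p) = (\<Sum>s\<in>h ` A. \<Phi> s * Push h f s)"
    by (rule push_pair_gen[symmetric]) (use assms in auto)
  thus ?thesis using assms(1) by simp
qed

lemma push_add:
  fixes f g :: "bmon \<Rightarrow> 'k::field"
  assumes "finite {m. f m \<noteq> 0}" "finite {m. g m \<noteq> 0}"
  shows "Push h (\<lambda>m. f m + g m) = (\<lambda>r. Push h f r + Push h g r)"
proof
  fix r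
  let ?A = "{m. f m \<noteq> 0} \<union> {m. g m \<noteq> 0}"
  show "Push h (\<lambda>m. f m + g m) r = Push h f r + Push h g r"
    by (subst (1 2 3) push_superset[where A="?A"]) (use assms in \<open>auto simp: sum.distrib[symmetric] intro!: sum.cong\<close>)
qed

lemma push_neg:
  fixes f :: "bmon \<Rightarrow> 'k::field"
  assumes "finite {m. f m \<noteq> 0}"
  shows "Push h (\<lambda>m. - f m) = (\<lambda>r. - Push h f r)"
proof
  fix r
  show "Push h (\<lambda>m. - f m) r = - Push h f r"
    by (subst (1 2) push_superset[where A="{m. f m \<noteq> 0}"]) (use assms in \<open>auto simp: sum_negf[symmetric] intro!: sum.cong\<close>)
qed

lemma push_zero: "Push h (\<lambda>_. 0::'k::field) = (\<lambda>_. 0)"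
  by (auto simp: Push_def fun_eq_iff)

lemma push_mult_r:
  fixes f g :: "bmon \<Rightarrow> 'k::field"
  assumes "finite {m. f m \<noteq> 0}" "finite {m. g m \<noteq> 0}" "Push h f = (\<lambda>_. 0)"
    and hom: "\<And>p q. h (bmul p (h q)) = h (bmul p q)"
  shows "Push h (Sn_mult g f) = (\<lambda>_. 0)"
proof
  fix r
  let ?A = "{m. g m \<noteq> 0}" and ?B = "{m. f m \<noteq> 0}"
  let ?AB = "(\<lambda>pq. bmul (fst pq) (snd pq)) ` (?A \<times> ?B)"
  have sAB: "{m. Sn_mult g f m \<noteq> 0} \<subseteq> ?AB"
    by (rule supp_mult) (use assms in auto)
  have "Push h (Sn_mult g f) r = (\<Sum>s\<in>?AB. (if h s = r then 1 else 0) * Sn_mult g f s)"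
    by (subst push_superset[where A="?AB"]) (use assms sAB in \<open>auto intro!: sum.cong\<close>)
  also have "\<dots> = (\<Sum>p\<in>?A. \<Sum>q\<in>?B. (if h (bmul p q) = r then 1 else 0) * (g p * f q))"
    by (rule mult_pair) (use assms in auto)
  also have "\<dots> = (\<Sum>p\<in>?A. g p * (\<Sum>q\<in>?B. (\<lambda>s. if h (bmul p s) = r then 1 else 0) (h q) * f q))"
    by (auto simp: hom sum_distrib_left mult_ac intro!: sum.cong)
  also have "\<dots> = 0"
    by (subst push_zero_sum[OF assms(3)]) (use assms in auto)
  finally show "Push h (Sn_mult g f) r = 0" .
qed

lemma push_mult_l:
  fixes f g :: "bmon \<Rightarrow> 'k::field"
  assumes "finite {m. f m \<noteq> 0}" "finite {m. g m \<noteq> 0}" "Push h f = (\<lambda>_. 0)"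
    and hom: "\<And>p q. h (bmul (h p) q) = h (bmul p q)"
  shows "Push h (Sn_mult f g) = (\<lambda>_. 0)"
proof
  fix r
  let ?A = "{m. f m \<noteq> 0}" and ?B = "{m. g m \<noteq> 0}"
  let ?AB = "(\<lambda>pq. bmul (fst pq) (snd pq)) ` (?A \<times> ?B)"
  have sAB: "{m. Sn_mult f g m \<noteq> 0} \<subseteq> ?AB"
    by (rule supp_mult) (use assms in auto)
  have "Push h (Sn_mult f g) r = (\<Sum>s\<in>?AB. (if h s = r then 1 else 0) * Sn_mult f g s)"
    by (subst push_superset[where A="?AB"]) (use assms sAB in \<open>auto intro!: sum.cong\<close>)
  also have "\<dots> = (\<Sum>p\<in>?A. \<Sum>q\<in>?B. (if h (bmul p q) = r then 1 else 0) * (f p * g q))"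
    by (rule mult_pair) (use assms in auto)
  also have "\<dots> = (\<Sum>q\<in>?B. \<Sum>p\<in>?A. (if h (bmul p q) = r then 1 else 0) * (f p * g q))"
    by (rule sum.swap)
  also have "\<dots> = (\<Sum>q\<in>?B. g q * (\<Sum>p\<in>?A. (\<lambda>s. if h (bmul s q) = r then 1 else 0) (h p) * f p))"
    by (auto simp: hom sum_distrib_left mult_ac intro!: sum.cong)
  also have "\<dots> = 0"
    by (subst push_zero_sum[OF assms(3)]) (use assms in auto)
  finally show "Push h (Sn_mult f g) r = 0" .
qed



definition redA :: "nat set \<Rightarrow> bmon \<Rightarrow> bmon" where
  "redA A p = ((\<lambda>i. if i \<in> A then fst p i - min (fst p i) (snd p i) else fst p i),
               (\<lambda>i. if i \<in> A then snd p i - min (fst p i) (snd p i) else snd p i))"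

lemma red2_eq: "int a - int b = int c - int d \<Longrightarrow> a - min a b = c - min c d \<and> b - min a b = d - min c d"
  by (auto simp: min_def)

lemma diff_bmul: "int (a1 + a2 - min b1 a2) - int (b1 + b2 - min b1 a2) = (int a1 - int b1) + (int a2 - int b2)"
  by (simp add: min_def)

lemma diff_red: "int (a - min a b) - int (b - min a b) = int a - int b"
  by (simp add: min_def)

lemma coord_r:
  fixes a1 b1 a2 b2 :: nat
  defines "c \<equiv> a2 - min a2 b2" and "d \<equiv> b2 - min a2 b2"
  shows "(a1 + c - min b1 c) - min (a1 + c - min b1 c) (b1 + d - min b1 c)
           = (a1 + a2 - min b1 a2) - min (a1 + a2 - min b1 a2) (b1 + b2 - min b1 a2)
       \<and> (b1 + d - min b1 c) - min (a1 + c - min b1 c) (b1 + d - min b1 c)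
           = (b1 + b2 - min b1 a2) - min (a1 + a2 - min b1 a2) (b1 + b2 - min b1 a2)"
  by (rule red2_eq) (simp only: diff_bmul c_def d_def diff_red)

lemma coord_l:
  fixes a1 b1 a2 b2 :: nat
  defines "c \<equiv> a1 - min a1 b1" and "d \<equiv> b1 - min a1 b1"
  shows "(c + a2 - min d a2) - min (c + a2 - min d a2) (d + b2 - min d a2)
           = (a1 + a2 - min b1 a2) - min (a1 + a2 - min b1 a2) (b1 + b2 - min b1 a2)
       \<and> (d + b2 - min d a2) - min (c + a2 - min d a2) (d + b2 - min d a2)
           = (b1 + b2 - min b1 a2) - min (a1 + a2 - min b1 a2) (b1 + b2 - min b1 a2)"
  by (rule red2_eq) (simp only: diff_bmul c_def d_def diff_red)

lemma redA_bmul_r: "redA A (bmul p (redA A q)) = redA A (bmul p q)"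
proof -
  have "fst (redA A (bmul p (redA A q))) i = fst (redA A (bmul p q)) i \<and>
        snd (redA A (bmul p (redA A q))) i = snd (redA A (bmul p q)) i" for i
  proof (cases "i \<in> A")
    case True
    then show ?thesis using coord_r[of "fst p i" "fst q i" "snd q i" "snd p i"]
      by (simp add: redA_def bmul_def)
  next
    case False then show ?thesis by (simp add: redA_def bmul_def)
  qed
  thus ?thesis by (simp add: prod_eq_iff fun_eq_iff)
qed

lemma redA_bmul_l: "redA A (bmul (redA A p) q) = redA A (bmul p q)"
proof -
  have "fst (redA A (bmul (redA A p) q)) i = fst (redA A (bmul p q)) i \<and>
        snd (redA A (bmul (redA A p) q)) i = snd (redA A (bmul p q)) i" for i
  proof (cases "i \<in> A")
    case True
    then show ?thesis using coord_l[of "fst p i" "snd p i" "fst q i" "snd q i"]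
      by (simp add: redA_def bmul_def)
  next
    case False then show ?thesis by (simp add: redA_def bmul_def)
  qed
  thus ?thesis by (simp add: prod_eq_iff fun_eq_iff)
qed



definition sg :: "bmon \<Rightarrow> bmon \<Rightarrow> 'k::field" where
  "sg p = (\<lambda>m. if m = p then 1 else 0)"

definition monv :: "nat set \<Rightarrow> nat \<Rightarrow> bmon" where
  "monv A k = ((\<lambda>i. if i \<in> A then k else 0), (\<lambda>i. if i \<in> A then k else 0))"

lemma sg_supp: "{m. (sg p :: bmon \<Rightarrow> 'k::field) m \<noteq> 0} = {p}"
  by (auto simp: sg_def)

lemma sg_carrier: "p \<in> bmons n \<Longrightarrow> sg p \<in> Sn_carrier n"
  by (auto simp: Sn_carrier_def sg_def)

lemma monv_bmons: "A \<subseteq> {1..n} \<Longrightarrow> monv A k \<in> bmons n"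
  by (auto simp: bmons_def monv_def)

lemma Sn_one_sg: "Sn_one = sg ((\<lambda>_. 0), (\<lambda>_. 0))"
  by (simp add: Sn_one_def sg_def fun_eq_iff)

lemma monv_empty: "monv {} k = ((\<lambda>_. 0), (\<lambda>_. 0))"
  by (simp add: monv_def)

lemma monv_zero: "monv A 0 = ((\<lambda>_. 0), (\<lambda>_. 0))"
  by (simp add: monv_def)

lemma sg_mult: "Sn_mult (sg p) (sg q) = (sg (bmul p q) :: bmon \<Rightarrow> 'k::field)"
proof
  fix m
  show "Sn_mult (sg p) (sg q) m = (sg (bmul p q) :: bmon \<Rightarrow> 'k::field) m"
    by (subst mult_superset[where A="{p}" and B="{q}"]) (auto simp: sg_def)
qed

lemma push_sg: "Push h (sg p) = (sg (h p) :: bmon \<Rightarrow> 'k::field)"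
  by (auto simp: Push_def sg_def fun_eq_iff)

lemma sg_mult_push:
  assumes "finite {m. f m \<noteq> 0}"
  shows "Sn_mult (sg p) f = Push (bmul p) (f :: bmon \<Rightarrow> 'k::field)"
proof
  fix m
  have "Sn_mult (sg p) f m = (\<Sum>pq\<in>{p} \<times> {m. f m \<noteq> 0}. if bmul (fst pq) (snd pq) = m then sg p (fst pq) * f (snd pq) else 0)"
    by (rule mult_superset) (use assms in \<open>auto simp: sg_def\<close>)
  also have "\<dots> = Push (bmul p) f m"
    by (subst push_superset[where A="{m. f m \<noteq> 0}"]) (use assms in \<open>auto simp: sum.cartesian_product' sg_def cong: if_cong\<close>)
  finally show "Sn_mult (sg p) f m = Push (bmul p) f m" .
qed

lemma bmul_monv: "A \<inter> B = {} \<Longrightarrow> bmul (monv A k) (monv B k) = monv (A \<union> B) k"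
  by (auto simp: bmul_def monv_def fun_eq_iff)

lemma redA_monv: "B \<subseteq> A \<Longrightarrow> redA A (monv B k) = ((\<lambda>_. 0), (\<lambda>_. 0))"
  by (auto simp: redA_def monv_def fun_eq_iff)

lemma bmul_monv_red:
  assumes "\<forall>i\<in>A. fst q i \<le> k"
  shows "bmul (monv A k) (redA A q) = bmul (monv A k) q"
  using assms by (auto simp: bmul_def monv_def redA_def fun_eq_iff min_def)

lemma redA_absorb: "i \<in> A \<Longrightarrow> redA A (redA {i} p) = redA A p"
  by (auto simp: redA_def fun_eq_iff min_def)

lemma vanish:
  fixes f :: "bmon \<Rightarrow> 'k::field"
  assumes "finite {m. f m \<noteq> 0}" "Push (redA A) f = (\<lambda>_. 0)"
    and bd: "\<And>q i. f q \<noteq> 0 \<Longrightarrow> i \<in> A \<Longrightarrow> fst q i \<le> k"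
  shows "Sn_mult (sg (monv A k)) f = (\<lambda>_. 0)"
proof
  fix r
  have "Sn_mult (sg (monv A k)) f r = (\<Sum>q\<in>{m. f m \<noteq> 0}. if bmul (monv A k) q = r then f q else 0)"
    by (simp add: sg_mult_push[OF assms(1)] push_superset[OF assms(1)])
  also have "\<dots> = (\<Sum>q\<in>{m. f m \<noteq> 0}. (\<lambda>s. if bmul (monv A k) s = r then 1 else 0) (redA A q) * f q)"
    by (rule sum.cong) (use bd in \<open>auto simp: bmul_monv_red\<close>)
  also have "\<dots> = 0" by (rule push_zero_sum) (use assms in auto)
  finally show "Sn_mult (sg (monv A k)) f r = 0" .
qed

lemma Sn_mult_minus_r:
  fixes f g h :: "bmon \<Rightarrow> 'k::field"
  assumes "finite {m. f m \<noteq> 0}" "finite {m. g m \<noteq> 0}" "finite {m. h m \<noteq> 0}"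
  shows "Sn_mult f (\<lambda>m. g m - h m) = (\<lambda>m. Sn_mult f g m - Sn_mult f h m)"
proof
  fix m
  let ?A = "{m. g m \<noteq> 0} \<union> {m. h m \<noteq> 0}" and ?C = "{m. f m \<noteq> 0}"
  show "Sn_mult f (\<lambda>m. g m - h m) m = Sn_mult f g m - Sn_mult f h m"
    by (subst (1 2 3) mult_superset[where A="?C" and B="?A"])
       (use assms in \<open>auto simp: sum_subtractf[symmetric] right_diff_distrib intro!: sum.cong\<close>)
qed

lemma Sn_mult_minus_l:
  fixes f g h :: "bmon \<Rightarrow> 'k::field"
  assumes "finite {m. f m \<noteq> 0}" "finite {m. g m \<noteq> 0}" "finite {m. h m \<noteq> 0}"
  shows "Sn_mult (\<lambda>m. g m - h m) f = (\<lambda>m. Sn_mult g f m - Sn_mult h f m)"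
proof
  fix m
  let ?A = "{m. g m \<noteq> 0} \<union> {m. h m \<noteq> 0}" and ?C = "{m. f m \<noteq> 0}"
  show "Sn_mult (\<lambda>m. g m - h m) f m = Sn_mult g f m - Sn_mult h f m"
    by (subst (1 2 3) mult_superset[where A="?A" and B="?C"])
       (use assms in \<open>auto simp: sum_subtractf[symmetric] left_diff_distrib intro!: sum.cong\<close>)
qed

lemma Sn_mult_zero_r: "Sn_mult f (\<lambda>_. 0) = (\<lambda>_. 0::'k::field)"
  by (simp add: Sn_mult_def fun_eq_iff)

lemma Sn_mult_zero_l: "Sn_mult (\<lambda>_. 0) f = (\<lambda>_. 0::'k::field)"
  by (simp add: Sn_mult_def fun_eq_iff)



definition Kset :: "nat \<Rightarrow> nat set \<Rightarrow> (bmon \<Rightarrow> 'k::field) set" where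
  "Kset n A = {f \<in> Sn_carrier n. Push (redA A) f = (\<lambda>_. 0)}"

definition Kc :: "nat \<Rightarrow> nat set \<Rightarrow> (bmon \<Rightarrow> 'k::field) set" where
  "Kc n T = {f \<in> Sn_carrier n. \<forall>i\<in>T. Push (redA {i}) f = (\<lambda>_. 0)}"

lemma carr_fin: "f \<in> Sn_carrier n \<Longrightarrow> finite {m. f m \<noteq> 0}"
  by (simp add: Sn_carrier_def)

lemma pz_add: "f \<in> Sn_carrier n \<Longrightarrow> g \<in> Sn_carrier n \<Longrightarrow> Push h f = (\<lambda>_. 0) \<Longrightarrow> Push h g = (\<lambda>_. 0)
   \<Longrightarrow> Push h (\<lambda>m. f m + g m) = (\<lambda>_. 0::'k::field)"
  by (simp add: push_add carr_fin)

lemma pz_neg: "f \<in> Sn_carrier n \<Longrightarrow> Push h f = (\<lambda>_. 0)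
   \<Longrightarrow> Push h (\<lambda>m. - f m) = (\<lambda>_. 0::'k::field)"
  by (simp add: push_neg carr_fin)

lemma pz_mult_r: "f \<in> Sn_carrier n \<Longrightarrow> g \<in> Sn_carrier n \<Longrightarrow> Push (redA A) f = (\<lambda>_. 0)
   \<Longrightarrow> Push (redA A) (Sn_mult g f) = (\<lambda>_. 0::'k::field)"
  by (rule push_mult_r) (simp_all add: carr_fin redA_bmul_r)

lemma pz_mult_l: "f \<in> Sn_carrier n \<Longrightarrow> g \<in> Sn_carrier n \<Longrightarrow> Push (redA A) f = (\<lambda>_. 0)
   \<Longrightarrow> Push (redA A) (Sn_mult f g) = (\<lambda>_. 0::'k::field)"
  by (rule push_mult_l) (simp_all add: carr_fin redA_bmul_l)

lemma Kc_ideal: "ideal (Kc n T :: (bmon \<Rightarrow> 'k::field) set) (Sn n)"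
proof -
  interpret R: ring "Sn n :: (bmon \<Rightarrow> 'k) ring" by (rule Sn_ring)
  show ?thesis
  proof (rule idealI[OF Sn_ring])
    show "subgroup (Kc n T :: (bmon \<Rightarrow> 'k) set) (add_monoid (Sn n))"
    proof (rule subgroup.intro, goal_cases)
      case 1 thus ?case by (auto simp: Kc_def)
    next
      case (2 x y) thus ?case by (auto simp: Kc_def pz_add Sn_add_closed)
    next
      case 3 thus ?case by (auto simp: Kc_def push_zero Sn_carrier_def)
    next
      case (4 x)
      hence "x \<in> Sn_carrier n" by (simp add: Kc_def)
      hence "inv\<^bsub>add_monoid (Sn n)\<^esub> x = (\<lambda>m. - x m)"
        using Sn_a_inv[of x n] by (simp add: a_inv_def)
      thus ?case using 4 by (auto simp: Kc_def pz_neg Sn_neg_closed)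
    qed
  next
    fix a x assume "a \<in> (Kc n T :: (bmon \<Rightarrow> 'k) set)" "x \<in> carrier (Sn n :: (bmon \<Rightarrow> 'k) ring)"
    thus "x \<otimes>\<^bsub>Sn n\<^esub> a \<in> Kc n T" "a \<otimes>\<^bsub>Sn n\<^esub> x \<in> Kc n T"
      by (auto simp: Kc_def pz_mult_r pz_mult_l Sn_mult_closed)
  qed
qed

lemma Kset_ideal: "ideal (Kset n A :: (bmon \<Rightarrow> 'k::field) set) (Sn n)"
proof -
  interpret R: ring "Sn n :: (bmon \<Rightarrow> 'k) ring" by (rule Sn_ring)
  show ?thesis
  proof (rule idealI[OF Sn_ring])
    show "subgroup (Kset n A :: (bmon \<Rightarrow> 'k) set) (add_monoid (Sn n))"
    proof (rule subgroup.intro, goal_cases)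
      case 1 thus ?case by (auto simp: Kset_def)
    next
      case (2 x y) thus ?case by (auto simp: Kset_def pz_add Sn_add_closed)
    next
      case 3 thus ?case by (auto simp: Kset_def push_zero Sn_carrier_def)
    next
      case (4 x)
      hence "x \<in> Sn_carrier n" by (simp add: Kset_def)
      hence "inv\<^bsub>add_monoid (Sn n)\<^esub> x = (\<lambda>m. - x m)"
        using Sn_a_inv[of x n] by (simp add: a_inv_def)
      thus ?case using 4 by (auto simp: Kset_def pz_neg Sn_neg_closed)
    qed
  next
    fix a x assume "a \<in> (Kset n A :: (bmon \<Rightarrow> 'k) set)" "x \<in> carrier (Sn n :: (bmon \<Rightarrow> 'k) ring)"
    thus "x \<otimes>\<^bsub>Sn n\<^esub> a \<in> Kset n A" "a \<otimes>\<^bsub>Sn n\<^esub> x \<in> Kset n A"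
      by (auto simp: Kset_def pz_mult_r pz_mult_l Sn_mult_closed)
  qed
qed

lemma Sx_sg: "Sx i = sg ((\<lambda>j. if j = i then 1 else 0), (\<lambda>_. 0))"
  by (simp add: Sx_def sg_def)

lemma Sy_sg: "Sy i = sg ((\<lambda>_. 0), (\<lambda>j. if j = i then 1 else 0))"
  by (simp add: Sy_def sg_def)

lemma Sxy: "Sn_mult (Sx i) (Sy i) = (sg (monv {i} 1) :: bmon \<Rightarrow> 'k::field)"
  by (simp add: Sx_sg Sy_sg sg_mult, rule arg_cong[where f=sg]) (auto simp: bmul_def monv_def fun_eq_iff)

lemma Se_eq: "Se i = (\<lambda>m. Sn_one m - (sg (monv {i} 1) m :: 'k::field))"
  by (simp add: Se_def Sxy)

lemma Se_carrier: "i \<in> {1..n} \<Longrightarrow> (Se i :: bmon \<Rightarrow> 'k::field) \<in> Sn_carrier n"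
proof -
  assume i: "i \<in> {1..n}"
  have "(\<lambda>m. Sn_one m + (- (sg (monv {i} 1) m :: 'k))) \<in> Sn_carrier n"
    by (intro Sn_add_closed Sn_neg_closed Sn_one_carrier sg_carrier monv_bmons) (use i in auto)
  thus ?thesis by (simp add: Se_eq)
qed

lemma redA_zero: "redA A ((\<lambda>_. 0), (\<lambda>_. 0)) = ((\<lambda>_. 0), (\<lambda>_. 0))"
  by (simp add: redA_def fun_eq_iff)

lemma Se_push: "Push (redA {i}) (Se i) = (\<lambda>_. 0::'k::field)"
proof -
  have "Push (redA {i}) (Se i) = Push (redA {i}) (\<lambda>m. Sn_one m + (- (sg (monv {i} 1) m :: 'k)))"
    by (simp add: Se_eq)
  also have "\<dots> = (\<lambda>r. Push (redA {i}) Sn_one r + Push (redA {i}) (\<lambda>m. - (sg (monv {i} 1) m :: 'k)) r)"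
    by (rule push_add) (simp_all add: sg_supp Sn_one_sg)
  also have "\<dots> = (\<lambda>r. Push (redA {i}) Sn_one r + - Push (redA {i}) (sg (monv {i} 1) :: bmon \<Rightarrow> 'k) r)"
    by (subst push_neg) (simp_all add: sg_supp)
  also have "\<dots> = (\<lambda>_. 0)"
    by (simp add: Sn_one_sg push_sg redA_zero redA_monv)
  finally show ?thesis .
qed

lemma Se_Kc: "i \<in> {1..n} \<Longrightarrow> (Se i :: bmon \<Rightarrow> 'k::field) \<in> Kc n {i}"
  by (simp add: Kc_def Se_carrier Se_push)



lemma bound_ex:
  assumes "f \<in> Sn_carrier n"
  shows "\<exists>k. \<forall>q i. f q \<noteq> 0 \<longrightarrow> fst q i \<le> k"
proof -
  define k where "k = (\<Sum>q\<in>{m. f m \<noteq> 0}. \<Sum>i\<le>n. fst q i)"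
  have "fst q i \<le> k" if "f q \<noteq> 0" for q i
  proof (cases "i \<le> n")
    case True
    have "fst q i \<le> (\<Sum>i\<le>n. fst q i)" by (rule member_le_sum) (use True in auto)
    also have "\<dots> \<le> k" unfolding k_def
      by (rule member_le_sum[where f="\<lambda>q. \<Sum>i\<le>n. fst q i"]) (use that assms in \<open>auto simp: carr_fin\<close>)
    finally show ?thesis .
  next
    case False
    have "q \<in> bmons n" using assms that unfolding Sn_carrier_def by blast
    hence "fst q i = 0" using False unfolding bmons_def by auto
    thus ?thesis by simp
  qed
  thus ?thesis by blast
qed

lemma pid_ideal: "i \<in> {1..n} \<Longrightarrow> ideal (pid n i :: (bmon \<Rightarrow> 'k::field) set) (Sn n)"
  unfolding pid_def
  by (rule ring.genideal_ideal[OF Sn_ring]) (simp add: Se_carrier)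

lemma Se_pid: "i \<in> {1..n} \<Longrightarrow> (Se i :: bmon \<Rightarrow> 'k::field) \<in> pid n i"
  unfolding pid_def
  by (rule ring.genideal_self'[OF Sn_ring]) (simp add: Se_carrier)

lemma pid_sub: "i \<in> {1..n} \<Longrightarrow> (pid n i :: (bmon \<Rightarrow> 'k::field) set) \<subseteq> Kc n {i}"
  unfolding pid_def
  by (rule ring.genideal_minimal[OF Sn_ring Kc_ideal]) (simp add: Se_Kc)

lemma tele:
  assumes i: "i \<in> {1..n}"
  shows "(\<lambda>m. Sn_one m - (sg (monv {i} k) m :: 'k::field)) \<in> pid n i"
proof (induction k)
  case 0
  have "\<zero>\<^bsub>Sn n\<^esub> \<in> (pid n i :: (bmon \<Rightarrow> 'k) set)"
    using additive_subgroup.zero_closed[OF ideal.axioms(1)[OF pid_ideal[OF i]]] .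
  thus ?case by (simp add: monv_zero Sn_one_sg)
next
  case (Suc k)
  define xk :: bmon where "xk = ((\<lambda>j. if j = i then k else 0), (\<lambda>_. 0))"
  define yk :: bmon where "yk = ((\<lambda>_. 0), (\<lambda>j. if j = i then k else 0))"
  have xb: "xk \<in> bmons n" "yk \<in> bmons n" using i by (auto simp: xk_def yk_def bmons_def)
  have e1: "bmul xk yk = monv {i} k" by (auto simp: xk_def yk_def bmul_def monv_def fun_eq_iff)
  have e2: "bmul (bmul xk (monv {i} 1)) yk = monv {i} (Suc k)"
    by (auto simp: xk_def yk_def bmul_def monv_def fun_eq_iff)
  have "Sn_mult (sg xk) (Se i) = (\<lambda>m. Sn_mult (sg xk) Sn_one m - Sn_mult (sg xk) (sg (monv {i} 1)) m :: 'k)"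
    unfolding Se_eq by (rule Sn_mult_minus_r) (simp_all add: sg_supp Sn_one_sg)
  also have "\<dots> = (\<lambda>m. sg xk m - sg (bmul xk (monv {i} 1)) m)"
    by (simp add: Sn_mult_one_r sg_supp sg_mult)
  finally have h1: "Sn_mult (sg xk) (Se i) = (\<lambda>m. sg xk m - (sg (bmul xk (monv {i} 1)) m :: 'k))" .
  have "Sn_mult (Sn_mult (sg xk) (Se i)) (sg yk) = (\<lambda>m. Sn_mult (sg xk) (sg yk) m - Sn_mult (sg (bmul xk (monv {i} 1))) (sg yk) m :: 'k)"
    unfolding h1 by (rule Sn_mult_minus_l) (simp_all add: sg_supp)
  also have "\<dots> = (\<lambda>m. sg (monv {i} k) m - sg (monv {i} (Suc k)) m)"
    by (simp only: sg_mult e1 e2)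
  finally have h2: "Sn_mult (Sn_mult (sg xk) (Se i)) (sg yk) = (\<lambda>m. sg (monv {i} k) m - (sg (monv {i} (Suc k)) m :: 'k))" .
  have I: "ideal (pid n i :: (bmon \<Rightarrow> 'k) set) (Sn n)" by (rule pid_ideal[OF i])
  have "Sn_mult (sg xk) (Se i) \<in> (pid n i :: (bmon \<Rightarrow> 'k) set)"
    using ideal.I_l_closed[OF I Se_pid[OF i], of "sg xk"] xb by (simp add: sg_carrier)
  hence "Sn_mult (Sn_mult (sg xk) (Se i)) (sg yk) \<in> (pid n i :: (bmon \<Rightarrow> 'k) set)"
    using ideal.I_r_closed[OF I, of _ "sg yk"] xb by (simp add: sg_carrier)
  hence d: "(\<lambda>m. sg (monv {i} k) m - (sg (monv {i} (Suc k)) m :: 'k)) \<in> pid n i" using h2 by simp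
  have "(\<lambda>m. Sn_one m - (sg (monv {i} k) m :: 'k)) \<oplus>\<^bsub>Sn n\<^esub> (\<lambda>m. sg (monv {i} k) m - sg (monv {i} (Suc k)) m) \<in> pid n i"
    by (rule additive_subgroup.a_closed[OF ideal.axioms(1)[OF I] Suc d])
  thus ?case by simp
qed

lemma Kc_sub_pid:
  assumes i: "i \<in> {1..n}" and f: "f \<in> Kc n {i}"
  shows "(f :: bmon \<Rightarrow> 'k::field) \<in> pid n i"
proof -
  have fc: "f \<in> Sn_carrier n" and fp: "Push (redA {i}) f = (\<lambda>_. 0)" using f by (auto simp: Kc_def)
  obtain k where k: "\<And>q j. f q \<noteq> 0 \<Longrightarrow> fst q j \<le> k" using bound_ex[OF fc] by blast
  have v: "Sn_mult (sg (monv {i} k)) f = (\<lambda>_. 0)"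
    by (rule vanish) (use fc fp k in \<open>auto simp: carr_fin\<close>)
  have "Sn_mult (\<lambda>m. Sn_one m - sg (monv {i} k) m) f = (\<lambda>m. Sn_mult Sn_one f m - Sn_mult (sg (monv {i} k)) f m)"
    by (rule Sn_mult_minus_l) (simp_all add: carr_fin[OF fc] sg_supp Sn_one_sg)
  also have "\<dots> = f" by (simp add: v Sn_mult_one_l carr_fin[OF fc])
  finally have eq: "Sn_mult (\<lambda>m. Sn_one m - sg (monv {i} k) m) f = f" .
  have "Sn_mult (\<lambda>m. Sn_one m - sg (monv {i} k) m) f \<in> pid n i"
    using ideal.I_r_closed[OF pid_ideal[OF i] tele[OF i], of f] fc by simp
  thus ?thesis using eq by simp
qed

lemma pid_eq: "i \<in> {1..n} \<Longrightarrow> (pid n i :: (bmon \<Rightarrow> 'k::field) set) = Kc n {i}"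
  using pid_sub Kc_sub_pid by blast



lemma u_fix:
  assumes f: "f \<in> Kc n {i}"
  shows "\<exists>k. Sn_mult (\<lambda>m. Sn_one m - sg (monv {i} k) m) f = (f :: bmon \<Rightarrow> 'k::field)"
proof -
  have fc: "f \<in> Sn_carrier n" and fp: "Push (redA {i}) f = (\<lambda>_. 0)" using f by (auto simp: Kc_def)
  obtain k where k: "\<And>q j. f q \<noteq> 0 \<Longrightarrow> fst q j \<le> k" using bound_ex[OF fc] by blast
  have v: "Sn_mult (sg (monv {i} k)) f = (\<lambda>_. 0)"
    by (rule vanish) (use fc fp k in \<open>auto simp: carr_fin\<close>)
  have "Sn_mult (\<lambda>m. Sn_one m - sg (monv {i} k) m) f = (\<lambda>m. Sn_mult Sn_one f m - Sn_mult (sg (monv {i} k)) f m)"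
    by (rule Sn_mult_minus_l) (simp_all add: carr_fin[OF fc] sg_supp Sn_one_sg)
  also have "\<dots> = f" by (simp add: v Sn_mult_one_l carr_fin[OF fc])
  finally show ?thesis by blast
qed

lemma Kc_insert: "Kc n (insert i J) = Kc n {i} \<inter> Kc n J"
  by (auto simp: Kc_def)

lemma Kc_sub: "Kc n J \<subseteq> Sn_carrier n"
  by (auto simp: Kc_def)

lemma Kc_mono: "J \<subseteq> J' \<Longrightarrow> Kc n J' \<subseteq> Kc n J"
  by (auto simp: Kc_def)

lemma prod_gen_sub:
  assumes i: "i \<in> {1..n}"
  shows "{a \<otimes>\<^bsub>Sn n\<^esub> b | a b. a \<in> (pid n i :: (bmon \<Rightarrow> 'k::field) set) \<and> b \<in> Kc n J} \<subseteq> Kc n (insert i J)"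
proof
  fix x assume "x \<in> {a \<otimes>\<^bsub>Sn n\<^esub> b | a b. a \<in> (pid n i :: (bmon \<Rightarrow> 'k::field) set) \<and> b \<in> Kc n J}"
  then obtain a b where x: "x = Sn_mult a b" and a0: "a \<in> pid n i" and b: "b \<in> Kc n J"
    by auto
  have a: "a \<in> Kc n {i}" using a0 pid_sub[OF i] by blast
  have ac: "a \<in> Sn_carrier n" and bc: "b \<in> Sn_carrier n" using a b by (auto simp: Kc_def)
  have "Sn_mult a b \<in> Kc n {i}" using ideal.I_r_closed[OF Kc_ideal a, of b] bc by simp
  moreover have "Sn_mult a b \<in> Kc n J" using ideal.I_l_closed[OF Kc_ideal b, of a] ac by simp
  ultimately show "x \<in> Kc n (insert i J)" using x by (auto simp: Kc_def)
qed

lemma prod_eq: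
  assumes i: "i \<in> {1..n}"
  shows "ideal_prod (Sn n) (pid n i) (Kc n J) = (Kc n (insert i J) :: (bmon \<Rightarrow> 'k::field) set)"
proof (rule equalityI)
  show "ideal_prod (Sn n) (pid n i) (Kc n J) \<subseteq> (Kc n (insert i J) :: (bmon \<Rightarrow> 'k::field) set)"
    unfolding ideal_prod_def using ring.genideal_minimal[OF Sn_ring[of n] Kc_ideal[of n "insert i J"] prod_gen_sub[OF i, where J=J]] by simp
  show "(Kc n (insert i J) :: (bmon \<Rightarrow> 'k::field) set) \<subseteq> ideal_prod (Sn n) (pid n i) (Kc n J)"
  proof
    fix f assume f: "f \<in> (Kc n (insert i J) :: (bmon \<Rightarrow> 'k) set)"
    hence fi: "f \<in> Kc n {i}" and fJ: "f \<in> Kc n J" by (auto simp: Kc_def)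
    obtain k where k: "Sn_mult (\<lambda>m. Sn_one m - sg (monv {i} k) m) f = f" using u_fix[OF fi] by blast
    have eq: "f = (\<lambda>m. Sn_one m - sg (monv {i} k) m) \<otimes>\<^bsub>Sn n\<^esub> f" using k by simp
    have "f \<in> {a \<otimes>\<^bsub>Sn n\<^esub> b | a b. a \<in> (pid n i :: (bmon \<Rightarrow> 'k) set) \<and> b \<in> Kc n J}"
      using tele[OF i, of k] fJ eq by blast
    moreover have "{a \<otimes>\<^bsub>Sn n\<^esub> b | a b. a \<in> (pid n i :: (bmon \<Rightarrow> 'k) set) \<and> b \<in> Kc n J} \<subseteq> carrier (Sn n)"
      using prod_gen_sub[OF i, where J=J] Kc_sub[of n "insert i J"] by (simp only: Sn_simps) (rule subset_trans)
    ultimately have "f \<in> genideal (Sn n) {a \<otimes>\<^bsub>Sn n\<^esub> b | a b. a \<in> (pid n i :: (bmon \<Rightarrow> 'k) set) \<and> b \<in> Kc n J}"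
      using ring.genideal_self[OF Sn_ring[of n]] by blast
    thus "f \<in> ideal_prod (Sn n) (pid n i) (Kc n J)" by (simp only: ideal_prod_def)
  qed
qed

lemma foldr_K:
  "set xs \<subseteq> {1..n} \<Longrightarrow> foldr (\<lambda>i J. ideal_prod (Sn n) (pid n i) J) xs (carrier (Sn n)) = (Kc n (set xs) :: (bmon \<Rightarrow> 'k::field) set)"
proof (induction xs)
  case Nil thus ?case by (simp add: Kc_def)
next
  case (Cons a xs) thus ?case by (simp add: prod_eq)
qed

lemma pI_eq:
  assumes "I \<subseteq> {1..n}"
  shows "pI n I = (Kc n I :: (bmon \<Rightarrow> 'k::field) set)"
proof -
  have fI: "finite I" using assms finite_subset by blast
  have "set (sorted_list_of_set I) = I" using fI by simp
  thus ?thesis unfolding pI_def using foldr_K[of "sorted_list_of_set I" n] assms by simp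
qed



definition Gs :: "nat \<Rightarrow> nat set set \<Rightarrow> (bmon \<Rightarrow> 'k::field) set" where
  "Gs n \<T> = genideal (Sn n) (\<Union>{Kc n T | T. T \<in> \<T>})"

definition Ws :: "nat \<Rightarrow> nat set set \<Rightarrow> (bmon \<Rightarrow> 'k::field) set" where
  "Ws n \<T> = {f \<in> Sn_carrier n. \<forall>B. B \<subseteq> {1..n} \<and> (\<forall>T\<in>\<T>. \<not> T \<subseteq> B) \<longrightarrow> Push (redA ({1..n} - B)) f = (\<lambda>_. 0)}"

lemma Gs_ideal: "ideal (Gs n \<T> :: (bmon \<Rightarrow> 'k::field) set) (Sn n)"
proof -
  have "(\<Union>{Kc n T | T. T \<in> \<T>} :: (bmon \<Rightarrow> 'k) set) \<subseteq> carrier (Sn n)"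
    using Kc_sub by fastforce
  thus ?thesis unfolding Gs_def by (rule ring.genideal_ideal[OF Sn_ring])
qed

lemma Kc_Gs: "T \<in> \<T> \<Longrightarrow> (Kc n T :: (bmon \<Rightarrow> 'k::field) set) \<subseteq> Gs n \<T>"
proof -
  assume T: "T \<in> \<T>"
  have s: "(\<Union>{Kc n T | T. T \<in> \<T>} :: (bmon \<Rightarrow> 'k) set) \<subseteq> carrier (Sn n)"
    using Kc_sub by fastforce
  have "(Kc n T :: (bmon \<Rightarrow> 'k) set) \<subseteq> \<Union>{Kc n T | T. T \<in> \<T>}" using T by blast
  also have "\<dots> \<subseteq> Gs n \<T>" unfolding Gs_def by (rule ring.genideal_self[OF Sn_ring s])
  finally show ?thesis .
qed

lemma Ws_ideal: "ideal (Ws n \<T> :: (bmon \<Rightarrow> 'k::field) set) (Sn n)"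
proof (rule idealI[OF Sn_ring])
  show "subgroup (Ws n \<T> :: (bmon \<Rightarrow> 'k) set) (add_monoid (Sn n))"
  proof (rule subgroup.intro, goal_cases)
    case 1 thus ?case by (auto simp: Ws_def)
  next
    case (2 x y) thus ?case by (auto simp: Ws_def pz_add Sn_add_closed)
  next
    case 3 thus ?case by (auto simp: Ws_def push_zero Sn_carrier_def)
  next
    case (4 x)
    hence "x \<in> Sn_carrier n" by (simp add: Ws_def)
    hence "inv\<^bsub>add_monoid (Sn n)\<^esub> x = (\<lambda>m. - x m)"
      using Sn_a_inv[of x n] by (simp add: a_inv_def)
    thus ?case using 4 by (auto simp: Ws_def pz_neg Sn_neg_closed)
  qed
next
  fix a x assume "a \<in> (Ws n \<T> :: (bmon \<Rightarrow> 'k) set)" "x \<in> carrier (Sn n :: (bmon \<Rightarrow> 'k) ring)"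
  thus "x \<otimes>\<^bsub>Sn n\<^esub> a \<in> Ws n \<T>" "a \<otimes>\<^bsub>Sn n\<^esub> x \<in> Ws n \<T>"
    by (auto simp: Ws_def pz_mult_r pz_mult_l Sn_mult_closed)
qed

lemma push_absorb:
  fixes f :: "bmon \<Rightarrow> 'k::field"
  assumes "finite {m. f m \<noteq> 0}" "i \<in> A" "Push (redA {i}) f = (\<lambda>_. 0)"
  shows "Push (redA A) f = (\<lambda>_. 0)"
proof
  fix r
  have "Push (redA A) f r = (\<Sum>p\<in>{m. f m \<noteq> 0}. (\<lambda>s. if redA A s = r then 1 else 0) (redA {i} p) * f p)"
    by (subst push_superset[OF assms(1)]) (auto simp: redA_absorb[OF assms(2)] intro!: sum.cong)
  also have "\<dots> = 0" by (rule push_zero_sum[OF assms(3,1)]) simp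
  finally show "Push (redA A) f r = 0" .
qed

lemma Kc_Ws:
  assumes "T \<in> \<T>" "\<T> \<subseteq> Pow {1..n}"
  shows "(Kc n T :: (bmon \<Rightarrow> 'k::field) set) \<subseteq> Ws n \<T>"
proof
  fix f assume f: "f \<in> (Kc n T :: (bmon \<Rightarrow> 'k) set)"
  have "Push (redA ({1..n} - B)) f = (\<lambda>_. 0)" if B: "B \<subseteq> {1..n}" "\<forall>T\<in>\<T>. \<not> T \<subseteq> B" for B
  proof -
    have T: "T \<subseteq> {1..n}" using assms by blast
    obtain i where i: "i \<in> T" "i \<notin> B" using B(2) assms(1) by blast
    have iN: "i \<in> {1..n} - B" using i T by blast
    have fc: "finite {m. f m \<noteq> 0}" using f using carr_fin by (auto simp: Kc_def)
    have fp: "Push (redA {i}) f = (\<lambda>_. 0)" using f i(1) by (simp add: Kc_def)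
    show ?thesis by (rule push_absorb[OF fc iN fp])
  qed
  thus "f \<in> Ws n \<T>" using f by (auto simp: Ws_def Kc_def)
qed

lemma Gs_Ws:
  assumes "\<T> \<subseteq> Pow {1..n}"
  shows "(Gs n \<T> :: (bmon \<Rightarrow> 'k::field) set) \<subseteq> Ws n \<T>"
proof -
  have "(\<Union>{Kc n T | T. T \<in> \<T>} :: (bmon \<Rightarrow> 'k) set) \<subseteq> Ws n \<T>"
  proof (rule Union_least)
    fix X assume "X \<in> {(Kc n T :: (bmon \<Rightarrow> 'k) set) | T. T \<in> \<T>}"
    then obtain T where "X = Kc n T" "T \<in> \<T>" by blast
    thus "X \<subseteq> Ws n \<T>" using Kc_Ws[OF _ assms] by simp
  qed
  thus ?thesis unfolding Gs_def by (rule ring.genideal_minimal[OF Sn_ring Ws_ideal])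
qed



lemma v_carrier: "A \<subseteq> {1..n} \<Longrightarrow> (sg (monv A k) :: bmon \<Rightarrow> 'k::field) \<in> Sn_carrier n"
  by (intro sg_carrier monv_bmons)

lemma u_Kc: "j \<in> {1..n} \<Longrightarrow> (\<lambda>m. Sn_one m - (sg (monv {j} k) m :: 'k::field)) \<in> Kc n {j}"
  using tele pid_sub by blast

lemma vu_commute:
  assumes "j \<notin> A"
  shows "Sn_mult (sg (monv A k)) (\<lambda>m. Sn_one m - sg (monv {j} k) m)
       = Sn_mult (\<lambda>m. Sn_one m - sg (monv {j} k) m) (sg (monv A k) :: bmon \<Rightarrow> 'k::field)"
proof -
  have "Sn_mult (sg (monv A k)) (\<lambda>m. Sn_one m - sg (monv {j} k) m)
      = (\<lambda>m. Sn_mult (sg (monv A k)) Sn_one m - Sn_mult (sg (monv A k)) (sg (monv {j} k)) m :: 'k)"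
    by (rule Sn_mult_minus_r) (simp_all add: sg_supp Sn_one_sg)
  also have "\<dots> = (\<lambda>m. sg (monv A k) m - sg (monv (A \<union> {j}) k) m)"
    using assms by (simp add: Sn_mult_one_r sg_supp sg_mult bmul_monv)
  finally have 1: "Sn_mult (sg (monv A k)) (\<lambda>m. Sn_one m - sg (monv {j} k) m)
      = (\<lambda>m. sg (monv A k) m - (sg (monv (A \<union> {j}) k) m :: 'k))" .
  have "Sn_mult (\<lambda>m. Sn_one m - sg (monv {j} k) m) (sg (monv A k))
      = (\<lambda>m. Sn_mult Sn_one (sg (monv A k)) m - Sn_mult (sg (monv {j} k)) (sg (monv A k)) m :: 'k)"
    by (rule Sn_mult_minus_l) (simp_all add: sg_supp Sn_one_sg)
  also have "\<dots> = (\<lambda>m. sg (monv A k) m - sg (monv ({j} \<union> A) k) m)"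
    using assms by (simp add: Sn_mult_one_l sg_supp sg_mult bmul_monv)
  finally have 2: "Sn_mult (\<lambda>m. Sn_one m - sg (monv {j} k) m) (sg (monv A k))
      = (\<lambda>m. sg (monv A k) m - (sg (monv ({j} \<union> A) k) m :: 'k))" .
  show ?thesis unfolding 1 2 by (simp add: Un_commute)
qed

lemma vv: "j \<notin> A \<Longrightarrow> Sn_mult (sg (monv A k)) (sg (monv {j} k)) = (sg (monv (insert j A) k) :: bmon \<Rightarrow> 'k::field)"
  by (simp add: sg_mult bmul_monv)

lemma Ws_Gs:
  assumes TT: "\<T> \<subseteq> Pow {1..n}"
  shows "(Ws n \<T> :: (bmon \<Rightarrow> 'k::field) set) \<subseteq> Gs n \<T>"
proof
  fix f assume f: "f \<in> (Ws n \<T> :: (bmon \<Rightarrow> 'k) set)"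
  have fc: "f \<in> Sn_carrier n" using f by (simp add: Ws_def)
  obtain k where k: "\<And>q i. f q \<noteq> 0 \<Longrightarrow> fst q i \<le> k" using bound_ex[OF fc] by blast
  have GI: "ideal (Gs n \<T> :: (bmon \<Rightarrow> 'k) set) (Sn n)" by (rule Gs_ideal)
  have claim: "\<forall>P (g :: bmon \<Rightarrow> 'k). R \<subseteq> {1..n} \<longrightarrow> P \<subseteq> {1..n} \<longrightarrow> P \<inter> R = {} \<longrightarrow> g \<in> Kc n P \<longrightarrow>
      (\<forall>B\<subseteq>R. (\<forall>T\<in>\<T>. \<not> T \<subseteq> P \<union> B) \<longrightarrow> Sn_mult (sg (monv (R - B) k)) g = (\<lambda>_. 0))
      \<longrightarrow> g \<in> Gs n \<T>" if "finite R" for R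
    using that
  proof (induction R rule: finite_induct)
    case empty
    show ?case
    proof (intro allI impI)
      fix P and g :: "bmon \<Rightarrow> 'k"
      assume P: "P \<subseteq> {1..n}" and g: "g \<in> Kc n P"
        and cond: "\<forall>B\<subseteq>{}. (\<forall>T\<in>\<T>. \<not> T \<subseteq> P \<union> B) \<longrightarrow> Sn_mult (sg (monv ({} - B) k)) g = (\<lambda>_. 0)"
      have gc: "g \<in> Sn_carrier n" using g by (simp add: Kc_def)
      show "g \<in> Gs n \<T>"
      proof (cases "\<exists>T\<in>\<T>. T \<subseteq> P")
        case True
        then obtain T where T: "T \<in> \<T>" "T \<subseteq> P" by blast
        have "g \<in> Kc n T" using g Kc_mono[OF T(2)] by blast
        thus ?thesis using Kc_Gs[OF T(1)] by blast
      next
        case False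
        hence "Sn_mult (sg (monv {} k)) g = (\<lambda>_. 0)" using cond by auto
        moreover have "Sn_mult (sg (monv {} k)) g = g"
          by (simp add: monv_empty Sn_one_sg[symmetric] Sn_mult_one_l carr_fin[OF gc])
        ultimately have "g = \<zero>\<^bsub>Sn n\<^esub>" by simp
        thus ?thesis using additive_subgroup.zero_closed[OF ideal.axioms(1)[OF GI]] by simp
      qed
    qed
  next
    case (insert j R)
    show ?case
    proof (intro allI impI)
      fix P and g :: "bmon \<Rightarrow> 'k"
      assume RN: "insert j R \<subseteq> {1..n}" and P: "P \<subseteq> {1..n}" and disj: "P \<inter> insert j R = {}"
        and g: "g \<in> Kc n P"
        and cond: "\<forall>B\<subseteq>insert j R. (\<forall>T\<in>\<T>. \<not> T \<subseteq> P \<union> B) \<longrightarrow> Sn_mult (sg (monv (insert j R - B) k)) g = (\<lambda>_. 0)"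
      have jN: "j \<in> {1..n}" using RN by blast
      have gc: "g \<in> Sn_carrier n" using g by (simp add: Kc_def)
      define u :: "bmon \<Rightarrow> 'k" where "u = (\<lambda>m. Sn_one m - sg (monv {j} k) m)"
      have uK: "u \<in> Kc n {j}" unfolding u_def by (rule u_Kc[OF jN])
      have uc: "u \<in> Sn_carrier n" using uK by (simp add: Kc_def)
      have vjc: "(sg (monv {j} k) :: bmon \<Rightarrow> 'k) \<in> Sn_carrier n" using v_carrier[of "{j}" n k] jN by blast
      define g1 where "g1 = Sn_mult u g"
      define g2 where "g2 = Sn_mult (sg (monv {j} k)) g"
      have "g1 = (\<lambda>m. Sn_mult Sn_one g m - Sn_mult (sg (monv {j} k)) g m)"
        unfolding g1_def u_def
        by (rule Sn_mult_minus_l) (simp_all add: carr_fin[OF gc] sg_supp Sn_one_sg)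
      hence dec: "g = (\<lambda>m. g1 m + g2 m)"
        by (simp add: g2_def Sn_mult_one_l carr_fin[OF gc])
      have g1K: "g1 \<in> Kc n (insert j P)"
      proof -
        have "g1 \<in> Kc n P" unfolding g1_def
          using ideal.I_l_closed[OF Kc_ideal g, of u] uc by simp
        moreover have "g1 \<in> Kc n {j}" unfolding g1_def
          using ideal.I_r_closed[OF Kc_ideal uK, of g] gc by simp
        ultimately show ?thesis by (auto simp: Kc_def)
      qed
      have g2K: "g2 \<in> Kc n P" unfolding g2_def
        using ideal.I_l_closed[OF Kc_ideal g, of "sg (monv {j} k)"] vjc by simp
      have jR: "j \<notin> R" by (rule insert.hyps(2))
      have IH1: "g1 \<in> Gs n \<T>"
      proof -
        have c1: "\<forall>B\<subseteq>R. (\<forall>T\<in>\<T>. \<not> T \<subseteq> insert j P \<union> B) \<longrightarrow> Sn_mult (sg (monv (R - B) k)) g1 = (\<lambda>_. 0)"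
        proof (intro allI impI)
          fix B assume B: "B \<subseteq> R" and nT: "\<forall>T\<in>\<T>. \<not> T \<subseteq> insert j P \<union> B"
          have "insert j B \<subseteq> insert j R" using B by blast
          moreover have "P \<union> insert j B = insert j P \<union> B" by blast
          ultimately have z: "Sn_mult (sg (monv (insert j R - insert j B) k)) g = (\<lambda>_. 0)"
            using cond nT by metis
          have e: "insert j R - insert j B = R - B" using jR by blast
          have RBc: "(sg (monv (R - B) k) :: bmon \<Rightarrow> 'k) \<in> Sn_carrier n"
            using v_carrier[of "R - B" n k] RN by blast
          have jRB: "j \<notin> R - B" using jR by blast
          have "Sn_mult (sg (monv (R - B) k)) g1 = Sn_mult (Sn_mult (sg (monv (R - B) k)) u) g"
            unfolding g1_def
            by (rule mult_assoc_fun[symmetric]) (simp_all add: carr_fin[OF RBc] carr_fin[OF uc] carr_fin[OF gc])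
          also have "\<dots> = Sn_mult (Sn_mult u (sg (monv (R - B) k))) g"
            unfolding u_def by (rule arg_cong[where f="\<lambda>x. Sn_mult x g"], rule vu_commute[OF jRB])
          also have "\<dots> = Sn_mult u (Sn_mult (sg (monv (R - B) k)) g)"
            by (rule mult_assoc_fun) (simp_all add: carr_fin[OF RBc] carr_fin[OF uc] carr_fin[OF gc])
          also have "\<dots> = (\<lambda>_. 0)" using z e by (simp add: Sn_mult_zero_r)
          finally show "Sn_mult (sg (monv (R - B) k)) g1 = (\<lambda>_. 0)" .
        qed
        have r: "R \<subseteq> {1..n}" "insert j P \<subseteq> {1..n}" "insert j P \<inter> R = {}"
          using RN P disj jR by auto
        show ?thesis by (rule insert.IH[THEN spec[of _ "insert j P"], THEN spec[of _ g1], THEN mp, THEN mp, THEN mp, THEN mp, THEN mp, OF r(1) r(2) r(3) g1K c1])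
      qed
      have IH2: "g2 \<in> Gs n \<T>"
      proof -
        have c2: "\<forall>B\<subseteq>R. (\<forall>T\<in>\<T>. \<not> T \<subseteq> P \<union> B) \<longrightarrow> Sn_mult (sg (monv (R - B) k)) g2 = (\<lambda>_. 0)"
        proof (intro allI impI)
          fix B assume B: "B \<subseteq> R" and nT: "\<forall>T\<in>\<T>. \<not> T \<subseteq> P \<union> B"
          have "B \<subseteq> insert j R" using B by blast
          hence z: "Sn_mult (sg (monv (insert j R - B) k)) g = (\<lambda>_. 0)"
            using cond nT by blast
          have e: "insert j (R - B) = insert j R - B" using jR B by blast
          have RBc: "(sg (monv (R - B) k) :: bmon \<Rightarrow> 'k) \<in> Sn_carrier n"
            using v_carrier[of "R - B" n k] RN by blast
          have jRB: "j \<notin> R - B" using jR by blast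
          have "Sn_mult (sg (monv (R - B) k)) g2 = Sn_mult (Sn_mult (sg (monv (R - B) k)) (sg (monv {j} k))) g"
            unfolding g2_def
            by (rule mult_assoc_fun[symmetric]) (simp_all add: carr_fin[OF RBc] carr_fin[OF vjc] carr_fin[OF gc])
          also have "\<dots> = Sn_mult (sg (monv (insert j R - B) k)) g"
            by (simp only: vv[OF jRB] e)
          also have "\<dots> = (\<lambda>_. 0)" by (rule z)
          finally show "Sn_mult (sg (monv (R - B) k)) g2 = (\<lambda>_. 0)" .
        qed
        have r: "R \<subseteq> {1..n}" "P \<inter> R = {}"
          using RN disj by auto
        show ?thesis by (rule insert.IH[THEN spec[of _ P], THEN spec[of _ g2], THEN mp, THEN mp, THEN mp, THEN mp, THEN mp, OF r(1) P r(2) g2K c2])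
      qed
      have "g1 \<oplus>\<^bsub>Sn n\<^esub> g2 \<in> Gs n \<T>"
        by (rule additive_subgroup.a_closed[OF ideal.axioms(1)[OF GI] IH1 IH2])
      thus "g \<in> Gs n \<T>" using dec by simp
    qed
  qed
  have fK: "f \<in> Kc n {}" using fc by (simp add: Kc_def)
  have leaf: "\<forall>B\<subseteq>{1..n}. (\<forall>T\<in>\<T>. \<not> T \<subseteq> {} \<union> B) \<longrightarrow> Sn_mult (sg (monv ({1..n} - B) k)) f = (\<lambda>_. 0)"
  proof (intro allI impI)
    fix B assume B: "B \<subseteq> {1..n}" and nT: "\<forall>T\<in>\<T>. \<not> T \<subseteq> {} \<union> B"
    have "Push (redA ({1..n} - B)) f = (\<lambda>_. 0)" using f B nT by (simp add: Ws_def)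
    thus "Sn_mult (sg (monv ({1..n} - B) k)) f = (\<lambda>_. 0)"
      by (intro vanish) (use k fc in \<open>auto simp: carr_fin\<close>)
  qed
  show "f \<in> Gs n \<T>" by (rule claim[OF finite_atLeastAtMost, THEN spec[of _ "{}"], THEN spec[of _ f], THEN mp, THEN mp, THEN mp, THEN mp, THEN mp, OF order_refl empty_subsetI Int_empty_left fK leaf])
qed



lemma opu_inter:
  "one_plus_units (Sn n) X \<inter> one_plus_units (Sn n) Y = one_plus_units (Sn n) (X \<inter> (Y :: (bmon \<Rightarrow> 'k::field) set))"
proof -
  have "c = c'" if "(\<lambda>m. Sn_one m + c m) = (\<lambda>m. Sn_one m + (c' m :: 'k))" for c c'
  proof
    fix m show "c m = c' m" using fun_cong[OF that, of m] by simp
  qed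
  thus ?thesis unfolding one_plus_units_def by auto
qed

lemma Gs_mono:
  assumes "\<And>T. T \<in> \<T> \<Longrightarrow> \<exists>T'\<in>\<T>'. T' \<subseteq> T"
  shows "(Gs n \<T> :: (bmon \<Rightarrow> 'k::field) set) \<subseteq> Gs n \<T>'"
proof -
  have u: "(\<Union>{Kc n T | T. T \<in> \<T>} :: (bmon \<Rightarrow> 'k) set) \<subseteq> Gs n \<T>'"
  proof (rule Union_least)
    fix X assume "X \<in> {(Kc n T :: (bmon \<Rightarrow> 'k) set) | T. T \<in> \<T>}"
    then obtain T where X: "X = Kc n T" "T \<in> \<T>" by blast
    then obtain T' where T': "T' \<in> \<T>'" "T' \<subseteq> T" using assms by blast
    have "X \<subseteq> Kc n T'" using X T' Kc_mono by blast
    also have "\<dots> \<subseteq> Gs n \<T>'" by (rule Kc_Gs[OF T'(1)])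
    finally show "X \<subseteq> Gs n \<T>'" .
  qed
  show ?thesis by (subst Gs_def[of n \<T>]) (rule ring.genideal_minimal[OF Sn_ring Gs_ideal u])
qed

lemma Gs_single: "Gs n {T} = (Kc n T :: (bmon \<Rightarrow> 'k::field) set)"
proof
  have "(\<Union>{Kc n T' | T'. T' \<in> {T}} :: (bmon \<Rightarrow> 'k) set) = Kc n T" by auto
  hence "Gs n {T} = genideal (Sn n) (Kc n T :: (bmon \<Rightarrow> 'k) set)" by (simp add: Gs_def)
  thus "Gs n {T} \<subseteq> (Kc n T :: (bmon \<Rightarrow> 'k) set)"
    using ring.genideal_minimal[OF Sn_ring Kc_ideal[of n T] order_refl] by simp
  show "(Kc n T :: (bmon \<Rightarrow> 'k) set) \<subseteq> Gs n {T}" by (rule Kc_Gs) simp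
qed

lemma ideal_sum_Gs:
  assumes "\<And>T. T \<in> \<T> \<Longrightarrow> T \<subseteq> {1..n}"
  shows "ideal_sum (Sn n) {pI n I | I. I \<in> \<T>} = (Gs n \<T> :: (bmon \<Rightarrow> 'k::field) set)"
proof -
  have "{pI n I | I. I \<in> \<T>} = {(Kc n T :: (bmon \<Rightarrow> 'k) set) | T. T \<in> \<T>}"
    using pI_eq assms by blast
  thus ?thesis by (simp add: ideal_sum_def Gs_def)
qed

lemma ppn_Gs:
  assumes "S \<subseteq> {1..n-1}" "n \<ge> 1"
  shows "ppn n S = (Gs n {{i, n} | i. i \<in> S} :: (bmon \<Rightarrow> 'k::field) set)"
proof -
  have nN: "n \<in> {1..n}" using assms by simp
  have "ideal_prod (Sn n) (pid n i) (pid n n) = (Kc n {i, n} :: (bmon \<Rightarrow> 'k) set)" if "i \<in> S" for i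
  proof -
    have "i \<in> {1..n-1}" using that assms by blast
    hence i: "i \<in> {1..n}" by auto
    have "(pid n n :: (bmon \<Rightarrow> 'k) set) = Kc n {n}" by (rule pid_eq[OF nN])
    thus ?thesis using prod_eq[OF i, of "{n}"] by simp
  qed
  hence "{ideal_prod (Sn n) (pid n i) (pid n n) | i. i \<in> S} = {(Kc n T :: (bmon \<Rightarrow> 'k) set) | T. T \<in> {{i, n} | i. i \<in> S}}"
    by blast
  thus ?thesis by (simp add: ppn_def ideal_sum_def Gs_def)
qed

lemma ans_Gs: "a_ns n s = (Gs n {I. I \<subseteq> {1..n} \<and> card I = s} :: (bmon \<Rightarrow> 'k::field) set)"
proof -
  have "a_ns n s = ideal_sum (Sn n) {pI n I | I. I \<in> {I. I \<subseteq> {1..n} \<and> card I = s}}"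
    by (simp add: a_ns_def)
  also have "\<dots> = Gs n {I. I \<subseteq> {1..n} \<and> card I = s}" by (rule ideal_sum_Gs) auto
  finally show ?thesis .
qed

lemma combi:
  assumes s: "2 \<le> s" and B: "B \<subseteq> {1..n}" and i: "i \<in> S" "{i, n} \<subseteq> B" and S: "S \<subseteq> {1..n-1}"
    and I: "I \<subseteq> B" "card I = s"
  shows "\<exists>I'. I' \<subseteq> {1..n} \<and> card I' = s \<and> I' \<in> Jp n S \<and> I' \<subseteq> B"
proof -
  have fB: "finite B" using B finite_subset by blast
  have "i \<in> {1..n-1}" using i S by blast
  hence inn: "i \<noteq> n" by auto
  have "s \<le> card B" using I card_mono[OF fB] by metis
  hence "s - 2 \<le> card (B - {i, n})" using i inn fB by (simp add: card_Diff_subset)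
  then obtain J where J: "J \<subseteq> B - {i, n}" "card J = s - 2"
    using obtain_subset_with_card_n by metis
  have fJ: "finite J" using J fB finite_subset by blast
  let ?I = "insert i (insert n J)"
  have "i \<notin> J" "n \<notin> J" using J by auto
  hence "card ?I = Suc (Suc (card J))" using fJ inn by simp
  hence "card ?I = s" using J(2) s by simp
  moreover have "?I \<subseteq> B" using J i by blast
  moreover have "?I \<in> Jp n S" using J i B unfolding Jp_def by blast
  ultimately show ?thesis using B by blast
qed


theorem lemma5p1:
  fixes n :: nat and S :: "nat set"
  assumes "n \<ge> 3" and "S \<noteq> {}" and "S \<subseteq> {1..n-1}"
  shows "(\<forall>s \<in> {2..n-1}.
            one_plus_units (Sn n) (ppn n S :: (bmon \<Rightarrow> 'k::field) set)
              \<inter> one_plus_units (Sn n) (a_ns n s)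
            = one_plus_units (Sn n)
                (ideal_sum (Sn n) {pI n I | I. I \<subseteq> {1..n} \<and> card I = s \<and> I \<in> Jp n S}))
       \<and> one_plus_units (Sn n) (ppn n S :: (bmon \<Rightarrow> 'k::field) set) \<inter> one_plus_units (Sn n) (a_ns n n)
            = one_plus_units (Sn n) (Fn n)
       \<and> one_plus_units (Sn n) (ppn n S :: (bmon \<Rightarrow> 'k::field) set) \<inter> one_plus_units (Sn n) (a_ns n 1)
            = one_plus_units (Sn n) (ppn n S)
       \<and> one_plus_units (Sn n) (ppn n S :: (bmon \<Rightarrow> 'k::field) set) \<inter> one_plus_units (Sn n) (a_ns n 2)
            = one_plus_units (Sn n) (ppn n S)"
proof -
  have n1: "n \<ge> 1" using assms(1) by simp
  define T1 where "T1 = {{i, n} | i. i \<in> S}"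
  have ppn: "ppn n S = (Gs n T1 :: (bmon \<Rightarrow> 'k) set)"
    unfolding T1_def by (rule ppn_Gs[OF assms(3) n1])
  have Sn: "\<And>i. i \<in> S \<Longrightarrow> i \<in> {1..n} \<and> i \<noteq> n"
  proof -
    fix i assume "i \<in> S"
    hence "i \<in> {1..n-1}" using assms(3) by blast
    thus "i \<in> {1..n} \<and> i \<noteq> n" by auto
  qed
  have T1P: "T1 \<subseteq> Pow {1..n}" unfolding T1_def using Sn n1 by auto
  have A: "ppn n S \<inter> a_ns n s
      = (ideal_sum (Sn n) {pI n I | I. I \<subseteq> {1..n} \<and> card I = s \<and> I \<in> Jp n S} :: (bmon \<Rightarrow> 'k) set)"
    if s: "s \<in> {2..n-1}" for s
  proof -
    define T2 where "T2 = {I. I \<subseteq> {1..n} \<and> card I = s}"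
    define T3 where "T3 = {I. I \<subseteq> {1..n} \<and> card I = s \<and> I \<in> Jp n S}"
    have ans: "a_ns n s = (Gs n T2 :: (bmon \<Rightarrow> 'k) set)" unfolding T2_def by (rule ans_Gs)
    have "{pI n I | I. I \<subseteq> {1..n} \<and> card I = s \<and> I \<in> Jp n S} = {pI n I | I. I \<in> T3}"
      unfolding T3_def by simp
    hence rhs: "ideal_sum (Sn n) {pI n I | I. I \<subseteq> {1..n} \<and> card I = s \<and> I \<in> Jp n S}
        = (Gs n T3 :: (bmon \<Rightarrow> 'k) set)"
      using ideal_sum_Gs[of T3 n] unfolding T3_def by auto
    have T2P: "T2 \<subseteq> Pow {1..n}" unfolding T2_def by auto
    have T3P: "T3 \<subseteq> Pow {1..n}" unfolding T3_def by auto
    have sub: "Gs n T1 \<inter> Gs n T2 \<subseteq> (Gs n T3 :: (bmon \<Rightarrow> 'k) set)"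
    proof
      fix c assume c: "c \<in> Gs n T1 \<inter> (Gs n T2 :: (bmon \<Rightarrow> 'k) set)"
      have c1: "c \<in> Ws n T1" using c Gs_Ws[OF T1P] by blast
      have c2: "c \<in> Ws n T2" using c Gs_Ws[OF T2P] by blast
      have "c \<in> Ws n T3"
        unfolding Ws_def
      proof (intro CollectI conjI allI impI)
        show "c \<in> Sn_carrier n" using c1 by (simp add: Ws_def)
        fix B assume B: "B \<subseteq> {1..n} \<and> (\<forall>T\<in>T3. \<not> T \<subseteq> B)"
        show "Push (redA ({1..n} - B)) c = (\<lambda>_. 0)"
        proof (cases "\<forall>T\<in>T1. \<not> T \<subseteq> B")
          case True thus ?thesis using c1 B by (simp add: Ws_def)
        next
          case F1: False
          show ?thesis
          proof (cases "\<forall>T\<in>T2. \<not> T \<subseteq> B")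
            case True thus ?thesis using c2 B by (simp add: Ws_def)
          next
            case False
            then obtain I where I: "I \<subseteq> B" "card I = s" unfolding T2_def by blast
            obtain i where i: "i \<in> S" "{i, n} \<subseteq> B" using F1 unfolding T1_def by blast
            have "2 \<le> s" using s by simp
            then obtain I' where "I' \<subseteq> {1..n} \<and> card I' = s \<and> I' \<in> Jp n S \<and> I' \<subseteq> B"
              using combi[of s B n i S I] B i I assms(3) by blast
            hence False using B unfolding T3_def by blast
            thus ?thesis ..
          qed
        qed
      qed
      thus "c \<in> Gs n T3" using Ws_Gs[OF T3P] by blast
    qed
    have sup1: "(Gs n T3 :: (bmon \<Rightarrow> 'k) set) \<subseteq> Gs n T1"
    proof (rule Gs_mono)
      fix T assume "T \<in> T3"
      hence "n \<in> T" "\<exists>i\<in>S. i \<in> T" unfolding T3_def Jp_def by auto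
      then obtain i where "i \<in> S" "{i, n} \<subseteq> T" by blast
      thus "\<exists>T'\<in>T1. T' \<subseteq> T" unfolding T1_def by blast
    qed
    have sup2: "(Gs n T3 :: (bmon \<Rightarrow> 'k) set) \<subseteq> Gs n T2"
      by (rule Gs_mono) (auto simp: T3_def T2_def)
    show ?thesis unfolding ppn ans rhs using sub sup1 sup2 by blast
  qed
  have B: "ppn n S \<inter> a_ns n n = (Fn n :: (bmon \<Rightarrow> 'k) set)"
  proof -
    have "{I. I \<subseteq> {1..n} \<and> card I = n} = {{1..n}}"
    proof
      show "{I. I \<subseteq> {1..n} \<and> card I = n} \<subseteq> {{1..n}}"
      proof
        fix I assume "I \<in> {I. I \<subseteq> {1..n} \<and> card I = n}"
        hence "I \<subseteq> {1..n}" "card I = card {1..n}" by auto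
        hence "I = {1..n}" using card_subset_eq[of "{1..n}" I] by auto
        thus "I \<in> {{1..n}}" by simp
      qed
      show "{{1..n}} \<subseteq> {I. I \<subseteq> {1..n} \<and> card I = n}" by auto
    qed
    note eq = this
    have "a_ns n n = (Gs n {I. I \<subseteq> {1..n} \<and> card I = n} :: (bmon \<Rightarrow> 'k) set)" by (rule ans_Gs)
    also have "\<dots> = Gs n {{1..n}}" by (simp only: eq)
    also have "\<dots> = Kc n {1..n}" by (rule Gs_single)
    finally have ans: "a_ns n n = (Kc n {1..n} :: (bmon \<Rightarrow> 'k) set)" .
    have Fn: "Fn n = (Kc n {1..n} :: (bmon \<Rightarrow> 'k) set)" unfolding Fn_def by (rule pI_eq) simp
    obtain i where i: "i \<in> S" using assms(2) by blast
    have "(Kc n {1..n} :: (bmon \<Rightarrow> 'k) set) \<subseteq> Kc n {i, n}"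
      by (rule Kc_mono) (use Sn[OF i] n1 in auto)
    also have "\<dots> \<subseteq> Gs n T1" by (rule Kc_Gs) (use i in \<open>auto simp: T1_def\<close>)
    finally show ?thesis unfolding ppn ans Fn by blast
  qed
  have C: "ppn n S \<inter> a_ns n 1 = (ppn n S :: (bmon \<Rightarrow> 'k) set)"
  proof -
    have "(Gs n T1 :: (bmon \<Rightarrow> 'k) set) \<subseteq> Gs n {I. I \<subseteq> {1..n} \<and> card I = 1}"
    proof (rule Gs_mono)
      fix T assume "T \<in> T1"
      then obtain i where "i \<in> S" "T = {i, n}" unfolding T1_def by blast
      moreover have "{i} \<subseteq> {1..n}" using Sn[OF \<open>i \<in> S\<close>] by auto
      ultimately show "\<exists>T'\<in>{I. I \<subseteq> {1..n} \<and> card I = 1}. T' \<subseteq> T"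
        by (intro bexI[of _ "{i}"]) auto
    qed
    thus ?thesis unfolding ppn ans_Gs by blast
  qed
  have D: "ppn n S \<inter> a_ns n 2 = (ppn n S :: (bmon \<Rightarrow> 'k) set)"
  proof -
    have "(Gs n T1 :: (bmon \<Rightarrow> 'k) set) \<subseteq> Gs n {I. I \<subseteq> {1..n} \<and> card I = 2}"
    proof (rule Gs_mono)
      fix T assume "T \<in> T1"
      then obtain i where "i \<in> S" "T = {i, n}" unfolding T1_def by blast
      moreover have "{i, n} \<subseteq> {1..n}" "i \<noteq> n" using Sn[OF \<open>i \<in> S\<close>] n1 by auto
      ultimately show "\<exists>T'\<in>{I. I \<subseteq> {1..n} \<and> card I = 2}. T' \<subseteq> T"
        by (intro bexI[of _ "{i, n}"]) auto
    qed
    thus ?thesis unfolding ppn ans_Gs by blast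
  qed
  show ?thesis using A B C D by (simp add: opu_inter)
qed

end
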